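(* Let $H$ be a Hilbert space with inner product $\langle\cdot,\cdot\rangle$ and norm $\|\cdot\|$, let $T>0$, $\beta\in(0,1)$ and $g\in C^1([0,T];H)$. Then \[ \int_0^T \langle D_t^\beta g(t), g(t)\rangle\,dt \geq \frac{1/2}{\Gamma(1-\beta)}\int_0^T\left((T-t)^{-\beta}+t^{-\beta}\right)\|g(t)\|^2\,dt-\frac{1}{\Gamma(1-\beta)}\int_0^T t^{-\beta}\langle g(0),g(t)\rangle\,dt \] \[ \geq \frac{(T/2)^{-\beta}}{\Gamma(1-\beta)}\int_0^T\|g(t)\|^2\,dt-\frac{1}{\Gamma(1-\beta)}\int_0^T t^{-\beta}\langle g(0),g(t)\rangle\,dt. \]
   Context: $D_t^\beta$ denotes the Caputo fractional derivative of order $\beta\in(0,1)$: $D_t^\beta g(t)=\frac{1}{\Gamma(1-\beta)}\int_0^t (t-\tau)^{-\beta} g'(\tau)\,d\tau$. *)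

theory Defs
  imports "HOL-Analysis.Analysis"
begin

definition caputo :: "real \<Rightarrow> (real \<Rightarrow> 'a::real_normed_vector) \<Rightarrow> real \<Rightarrow> 'a" where
  "caputo \<beta> g t = (1 / Gamma (1 - \<beta>)) *\<^sub>R
     integral {0..t} (\<lambda>\<tau>. (t - \<tau>) powr (-\<beta>) *\<^sub>R vector_derivative g (at \<tau> within {0..t}))"

definition C1_on :: "real set \<Rightarrow> (real \<Rightarrow> 'a::real_normed_vector) \<Rightarrow> bool" where
  "C1_on S g \<longleftrightarrow> (\<exists>g'. (\<forall>t\<in>S. (g has_vector_derivative g' t) (at t within S)) \<and> continuous_on S g')"

end

theory Submission
  imports Defs
begin




lemma kernel_right:
  fixes f :: "real \<Rightarrow> 'a::banach" and t \<beta> :: real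
  assumes b0: "0 < \<beta>" and b1: "\<beta> < 1" and t0: "0 < t" and cf: "continuous_on {0..t} f"
  shows "((\<lambda>\<tau>. (t - \<tau>) powr (-\<beta>) *\<^sub>R f \<tau>) has_integral
          ((t powr (1-\<beta>) / (1-\<beta>)) *\<^sub>R integral {0..1} (\<lambda>s. f (t * (1 - s powr (1/(1-\<beta>))))))) {0..t}"
proof -
  define a where "a = 1 - \<beta>"
  define p where "p = 1 / a"
  have a0: "0 < a" and a1: "a < 1" using b0 b1 by (auto simp: a_def)
  have ap: "a * p = 1" using a0 by (simp add: p_def)
  have p0: "0 < p" using a0 by (simp add: p_def)
  define ft where "ft s = f (t * (1 - s powr p))" for s
  define \<phi> where "\<phi> \<tau> = ((t - \<tau>) / t) powr a" for \<tau>
  define \<phi>' where "\<phi>' \<tau> = - (a / t) * ((t - \<tau>) / t) powr (a - 1)" for \<tau>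
  have pow01: "s powr p \<in> {0..1}" if "s \<in> {0..1}" for s
    using that p0 by (auto intro: powr_le1)
  have contft: "continuous_on {0..1} ft"
    unfolding ft_def
  proof (rule continuous_on_compose2[OF cf])
    show "continuous_on {0..1} (\<lambda>s. t * (1 - s powr p))"
      by (intro continuous_intros continuous_on_powr') (use p0 in auto)
    show "(\<lambda>s. t * (1 - s powr p)) ` {0..1} \<subseteq> {0..t}"
      using pow01 t0 by (auto simp: mult_le_cancel_left1 mult_right_le_one_le)
  qed
  have phi_range: "\<phi> ` {0..t} \<subseteq> {0..1}"
    unfolding \<phi>_def using t0 a0 by (auto intro!: powr_le1 simp: divide_simps)
  have contphi: "continuous_on {0..t} \<phi>"
    unfolding \<phi>_def by (intro continuous_intros continuous_on_powr') (use t0 a0 in auto)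
  define F where "F \<tau> = integral {0..\<phi> \<tau>} ft" for \<tau>
  have contF: "continuous_on {0..t} F"
    unfolding F_def
    by (rule continuous_on_compose2[OF indefinite_integral_continuous_1[OF integrable_continuous_real[OF contft]] contphi phi_range])
  have derF: "(F has_vector_derivative (\<phi>' \<tau> *\<^sub>R ft (\<phi> \<tau>))) (at \<tau>)" if "\<tau> \<in> {0<..<t}" for \<tau>
  proof -
    have "(\<phi> has_real_derivative \<phi>' \<tau>) (at \<tau>)"
      unfolding \<phi>_def \<phi>'_def using that t0
      by (auto intro!: derivative_eq_intros simp: field_simps)
    then have d1: "(\<phi> has_vector_derivative \<phi>' \<tau>) (at \<tau>)"
      by (simp add: has_real_derivative_iff_has_vector_derivative)
    have q: "0 < (t - \<tau>) / t" "(t - \<tau>) / t < 1" using that t0 by auto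
    have "\<phi> \<tau> \<in> {0<..<1}"
      unfolding \<phi>_def using powr_less_mono2[OF a0 _ q(2)] q(1) by auto
    then have d2: "((\<lambda>u. integral {0..u} ft) has_vector_derivative ft (\<phi> \<tau>)) (at (\<phi> \<tau>))"
      using integral_has_vector_derivative[OF contft, of "\<phi> \<tau>"] at_within_Icc_at[of 0 "\<phi> \<tau>" 1]
      by auto
    show ?thesis
      using vector_diff_chain_at[OF d1 d2] by (simp add: F_def[abs_def] o_def)
  qed
  have "((\<lambda>\<tau>. \<phi>' \<tau> *\<^sub>R ft (\<phi> \<tau>)) has_integral (F t - F 0)) {0..t}"
    by (rule fundamental_theorem_of_calculus_interior) (use t0 contF derF in auto)
  moreover have "F t = 0" by (simp add: F_def \<phi>_def)
  moreover have "F 0 = integral {0..1} ft" using t0 by (simp add: F_def \<phi>_def)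
  ultimately have I: "((\<lambda>\<tau>. \<phi>' \<tau> *\<^sub>R ft (\<phi> \<tau>)) has_integral (- integral {0..1} ft)) {0..t}"
    by simp
  have "((\<lambda>\<tau>. (- (t powr a / a)) *\<^sub>R (\<phi>' \<tau> *\<^sub>R ft (\<phi> \<tau>))) has_integral ((- (t powr a / a)) *\<^sub>R (- integral {0..1} ft))) {0..t}"
    by (rule has_integral_cmul[OF I])
  then have "((\<lambda>\<tau>. (- (t powr a / a)) *\<^sub>R (\<phi>' \<tau> *\<^sub>R ft (\<phi> \<tau>))) has_integral ((t powr a / a) *\<^sub>R integral {0..1} ft)) {0..t}"
    by simp
  then have "((\<lambda>\<tau>. (t - \<tau>) powr (-\<beta>) *\<^sub>R f \<tau>) has_integral ((t powr a / a) *\<^sub>R integral {0..1} ft)) {0..t}"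
  proof (rule has_integral_spike_finite[of "{0,t}", rotated 2])
    show "finite {0,t}" by simp
  next
    fix \<tau> assume \<tau>: "\<tau> \<in> {0..t} - {0, t}"
    then have t1: "0 < t - \<tau>" "0 < \<tau>" by auto
    have "(((t - \<tau>) / t) powr a) powr p = (t - \<tau>) / t"
      using t1 t0 ap by (simp add: powr_powr)
    then have "t * (1 - (\<phi> \<tau>) powr p) = \<tau>" using t0 by (simp add: \<phi>_def field_simps)
    then have e1: "ft (\<phi> \<tau>) = f \<tau>" by (simp add: ft_def)
    have e2: "(- (t powr a / a)) * \<phi>' \<tau> = (t - \<tau>) powr (-\<beta>)"
      unfolding \<phi>'_def using t1 t0 a0
      by (simp add: powr_divide powr_diff a_def field_simps powr_minus)
    show "(t - \<tau>) powr (-\<beta>) *\<^sub>R f \<tau> = (- (t powr a / a)) *\<^sub>R (\<phi>' \<tau> *\<^sub>R ft (\<phi> \<tau>))"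
      using e1 e2 by (metis scaleR_scaleR)
  qed
  then show ?thesis by (simp add: a_def p_def ft_def[abs_def])
qed

lemma kernel_left:
  fixes f :: "real \<Rightarrow> 'a::banach" and t \<beta> :: real
  assumes b0: "0 < \<beta>" and b1: "\<beta> < 1" and t0: "0 < t" and cf: "continuous_on {0..t} f"
  shows "((\<lambda>\<tau>. \<tau> powr (-\<beta>) *\<^sub>R f \<tau>) has_integral
          ((t powr (1-\<beta>) / (1-\<beta>)) *\<^sub>R integral {0..1} (\<lambda>s. f (t * s powr (1/(1-\<beta>)))))) {0..t}"
proof -
  define a where "a = 1 - \<beta>"
  define p where "p = 1 / a"
  have a0: "0 < a" and a1: "a < 1" using b0 b1 by (auto simp: a_def)
  have ap: "a * p = 1" using a0 by (simp add: p_def)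
  have p0: "0 < p" using a0 by (simp add: p_def)
  define ft where "ft s = f (t * s powr p)" for s
  define \<phi> where "\<phi> \<tau> = (\<tau> / t) powr a" for \<tau>
  define \<phi>' where "\<phi>' \<tau> = (a / t) * (\<tau> / t) powr (a - 1)" for \<tau>
  have pow01: "s powr p \<in> {0..1}" if "s \<in> {0..1}" for s
    using that p0 by (auto intro: powr_le1)
  have contft: "continuous_on {0..1} ft"
    unfolding ft_def
  proof (rule continuous_on_compose2[OF cf])
    show "continuous_on {0..1} (\<lambda>s. t * s powr p)"
      by (intro continuous_intros continuous_on_powr') (use p0 in auto)
    show "(\<lambda>s. t * s powr p) ` {0..1} \<subseteq> {0..t}"
      using pow01 t0 by (auto simp: mult_le_cancel_left1 mult_right_le_one_le)
  qed
  have phi_range: "\<phi> ` {0..t} \<subseteq> {0..1}"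
    unfolding \<phi>_def using t0 a0 by (auto intro!: powr_le1 simp: divide_simps)
  have contphi: "continuous_on {0..t} \<phi>"
    unfolding \<phi>_def by (intro continuous_intros continuous_on_powr') (use t0 a0 in auto)
  define F where "F \<tau> = integral {0..\<phi> \<tau>} ft" for \<tau>
  have contF: "continuous_on {0..t} F"
    unfolding F_def
    by (rule continuous_on_compose2[OF indefinite_integral_continuous_1[OF integrable_continuous_real[OF contft]] contphi phi_range])
  have derF: "(F has_vector_derivative (\<phi>' \<tau> *\<^sub>R ft (\<phi> \<tau>))) (at \<tau>)" if "\<tau> \<in> {0<..<t}" for \<tau>
  proof -
    have "(\<phi> has_real_derivative \<phi>' \<tau>) (at \<tau>)"
      unfolding \<phi>_def \<phi>'_def using that t0
      by (auto intro!: derivative_eq_intros simp: field_simps)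
    then have d1: "(\<phi> has_vector_derivative \<phi>' \<tau>) (at \<tau>)"
      by (simp add: has_real_derivative_iff_has_vector_derivative)
    have q: "0 < \<tau> / t" "\<tau> / t < 1" using that t0 by auto
    have "\<phi> \<tau> \<in> {0<..<1}"
      unfolding \<phi>_def using powr_less_mono2[OF a0 _ q(2)] q(1) by auto
    then have d2: "((\<lambda>u. integral {0..u} ft) has_vector_derivative ft (\<phi> \<tau>)) (at (\<phi> \<tau>))"
      using integral_has_vector_derivative[OF contft, of "\<phi> \<tau>"] at_within_Icc_at[of 0 "\<phi> \<tau>" 1]
      by auto
    show ?thesis
      using vector_diff_chain_at[OF d1 d2] by (simp add: F_def[abs_def] o_def)
  qed
  have "((\<lambda>\<tau>. \<phi>' \<tau> *\<^sub>R ft (\<phi> \<tau>)) has_integral (F t - F 0)) {0..t}"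
    by (rule fundamental_theorem_of_calculus_interior) (use t0 contF derF in auto)
  moreover have "F 0 = 0" by (simp add: F_def \<phi>_def)
  moreover have "F t = integral {0..1} ft" using t0 by (simp add: F_def \<phi>_def)
  ultimately have I: "((\<lambda>\<tau>. \<phi>' \<tau> *\<^sub>R ft (\<phi> \<tau>)) has_integral (integral {0..1} ft)) {0..t}"
    by simp
  have "((\<lambda>\<tau>. (t powr a / a) *\<^sub>R (\<phi>' \<tau> *\<^sub>R ft (\<phi> \<tau>))) has_integral ((t powr a / a) *\<^sub>R integral {0..1} ft)) {0..t}"
    by (rule has_integral_cmul[OF I])
  then have "((\<lambda>\<tau>. \<tau> powr (-\<beta>) *\<^sub>R f \<tau>) has_integral ((t powr a / a) *\<^sub>R integral {0..1} ft)) {0..t}"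
  proof (rule has_integral_spike_finite[of "{0,t}", rotated 2])
    show "finite {0,t}" by simp
  next
    fix \<tau> assume \<tau>: "\<tau> \<in> {0..t} - {0, t}"
    then have t1: "0 < t - \<tau>" "0 < \<tau>" by auto
    have "((\<tau> / t) powr a) powr p = \<tau> / t"
      using t1 t0 ap by (simp add: powr_powr)
    then have "t * (\<phi> \<tau>) powr p = \<tau>" using t0 by (simp add: \<phi>_def field_simps)
    then have e1: "ft (\<phi> \<tau>) = f \<tau>" by (simp add: ft_def)
    have e2: "(t powr a / a) * \<phi>' \<tau> = \<tau> powr (-\<beta>)"
      unfolding \<phi>'_def using t1 t0 a0
      by (simp add: powr_divide powr_diff a_def field_simps powr_minus)
    show "\<tau> powr (-\<beta>) *\<^sub>R f \<tau> = (t powr a / a) *\<^sub>R (\<phi>' \<tau> *\<^sub>R ft (\<phi> \<tau>))"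
      using e1 e2 by (metis scaleR_scaleR)
  qed
  then show ?thesis by (simp add: a_def p_def ft_def[abs_def])
qed

lemma kernel_right_cont:
  fixes f :: "real \<Rightarrow> 'a::banach" and T \<beta> :: real
  assumes b0: "0 < \<beta>" and b1: "\<beta> < 1" and cf: "continuous_on {0..T} f"
  shows "continuous_on {0..T} (\<lambda>t. integral {0..t} (\<lambda>\<tau>. (t - \<tau>) powr (-\<beta>) *\<^sub>R f \<tau>))"
proof -
  define Q where "Q t = integral {0..1} (\<lambda>s. f (t * (1 - s powr (1/(1-\<beta>)))))" for t
  have p0: "0 < 1/(1-\<beta>)" using b1 by simp
  have eq: "integral {0..t} (\<lambda>\<tau>. (t - \<tau>) powr (-\<beta>) *\<^sub>R f \<tau>) = (t powr (1-\<beta>) / (1-\<beta>)) *\<^sub>R Q t"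
    if "t \<in> {0..T}" for t
  proof (cases "t = 0")
    case True then show ?thesis by simp
  next
    case False
    then have "0 < t" using that by auto
    from integral_unique[OF kernel_right[OF b0 b1 this continuous_on_subset[OF cf]]] that
    show ?thesis by (simp add: Q_def)
  qed
  have cQ: "continuous_on {0..T} Q"
  proof -
    have "continuous_on {0..T} (\<lambda>x. integral (cbox 0 1) (\<lambda>s. f (x * (1 - s powr (1/(1-\<beta>))))))"
    proof (rule integral_continuous_on_param, unfold cbox_interval)
    show "continuous_on ({0..T} \<times> {0..1}) (\<lambda>(x, s). f (x * (1 - s powr (1/(1-\<beta>)))))"
      unfolding split_beta
    proof (rule continuous_on_compose2[OF cf])
      show "continuous_on ({0..T} \<times> {0..1}) (\<lambda>z. fst z * (1 - snd z powr (1/(1-\<beta>))))"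
        using b1 by (auto intro!: continuous_intros continuous_on_powr' simp: p0)
      have "x * (1 - s powr (1/(1-\<beta>))) \<in> {0..T}" if "x \<in> {0..T}" "s \<in> {0..1}" for x s
      proof -
        have "s powr (1/(1-\<beta>)) \<in> {0..1}" using that p0 by (auto intro: powr_le1)
        then show ?thesis using that mult_left_le[of "1 - s powr (1/(1-\<beta>))" x] by auto
      qed
      then show "(\<lambda>z. fst z * (1 - snd z powr (1/(1-\<beta>)))) ` ({0..T} \<times> {0..1}) \<subseteq> {0..T}"
        by auto
    qed
  qed
  then show "continuous_on {0..T} Q" by (simp add: cbox_interval Q_def[abs_def])
  qed
  have "continuous_on {0..T} (\<lambda>t. (t powr (1-\<beta>) / (1-\<beta>)) *\<^sub>R Q t)"
    by (intro continuous_intros cQ continuous_on_powr') (use b1 in auto)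
  then show ?thesis by (rule continuous_on_eq) (simp add: eq)
qed


lemma ibp_s:
  fixes \<Psi> h' :: "real \<Rightarrow> real" and x T p :: real
  assumes p1: "1 < p" and x0: "0 < x" and xT: "x \<le> T"
    and dh: "\<And>\<tau>. \<tau> \<in> {0..T} \<Longrightarrow> (\<Psi> has_real_derivative h' \<tau>) (at \<tau> within {0..T})"
    and ch': "continuous_on {0..T} h'" and P0: "\<Psi> 0 = 0"
  shows "integral {0..1} (\<lambda>s. \<Psi> (x * (1 - s powr p))) = x * p * integral {0..1} (\<lambda>s. s powr p * h' (x * (1 - s powr p)))"
proof -
  have p0: "0 < p" using p1 by simp
  have cP: "continuous_on {0..T} \<Psi>" by (rule DERIV_continuous_on[OF dh])
  have rng: "x * (1 - s powr p) \<in> {0..T}" if "s \<in> {0..1}" for s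
  proof -
    have "s powr p \<in> {0..1}" using that p0 by (auto intro: powr_le1)
    then have ge: "0 \<le> x * (1 - s powr p)" using x0 by auto
    have le: "x * (1 - s powr p) \<le> x" by (rule mult_left_le) (use x0 in auto)
    show ?thesis unfolding atLeastAtMost_iff using le ge xT by linarith
  qed
  have cc: "continuous_on {0..1} (\<lambda>s. x * (1 - s powr p))"
    by (intro continuous_intros continuous_on_powr') (use p0 in auto)
  have cPc: "continuous_on {0..1} (\<lambda>s. \<Psi> (x * (1 - s powr p)))"
    by (rule continuous_on_compose2[OF cP cc]) (use rng in auto)
  have chc: "continuous_on {0..1} (\<lambda>s. h' (x * (1 - s powr p)))"
    by (rule continuous_on_compose2[OF ch' cc]) (use rng in auto)
  have chc2: "continuous_on {0..1} (\<lambda>s. s powr p * h' (x * (1 - s powr p)))"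
    by (intro continuous_intros continuous_on_powr' chc) (use p0 in auto)
  define F where "F s = s * \<Psi> (x * (1 - s powr p))" for s
  have cF: "continuous_on {0..1} F"
    unfolding F_def by (intro continuous_intros cPc)
  have dF: "(F has_vector_derivative (\<Psi> (x * (1 - s powr p)) - x * p * (s powr p * h' (x * (1 - s powr p))))) (at s)"
    if s: "s \<in> {0<..<1}" for s
  proof -
    have sp: "s powr p \<in> {0<..<1}" using s p0
      using powr_less_mono2[OF p0, of s 1] by auto
    have y1: "0 < x * (1 - s powr p)" using sp x0 by auto
    have y2: "x * (1 - s powr p) < x * 1" using sp x0 by (intro mult_strict_left_mono) auto
    have y: "x * (1 - s powr p) \<in> {0<..<T}" using y1 y2 xT by auto
    have atw: "at (x * (1 - s powr p)) within {0..T} = at (x * (1 - s powr p))"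
      using y by (intro at_within_Icc_at) auto
    have dP: "(\<Psi> has_real_derivative h' (x * (1 - s powr p))) (at (x * (1 - s powr p)))"
      using dh[of "x * (1 - s powr p)"] y atw by auto
    have dc: "((\<lambda>s. x * (1 - s powr p)) has_real_derivative (x * (- (p * s powr (p - 1))))) (at s)"
      using s by (auto intro!: derivative_eq_intros)
    have dPc: "((\<lambda>s. \<Psi> (x * (1 - s powr p))) has_real_derivative h' (x * (1 - s powr p)) * (x * (- (p * s powr (p - 1))))) (at s)"
      using DERIV_chain2[OF dP dc] .
    have "(F has_real_derivative (\<Psi> (x * (1 - s powr p)) + s * (h' (x * (1 - s powr p)) * (x * (- (p * s powr (p - 1))))))) (at s)"
      unfolding F_def[abs_def] by (auto intro!: derivative_eq_intros dPc)
    moreover have ss: "s * s powr (p - 1) = s powr p"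
      using s by (simp add: powr_diff)
    moreover have "s * (H * (x * (- (p * s powr (p - 1))))) = - (x * p * ((s * s powr (p - 1)) * H))" for H
      by (simp add: algebra_simps)
    ultimately have "(F has_real_derivative (\<Psi> (x * (1 - s powr p)) - x * p * (s powr p * h' (x * (1 - s powr p))))) (at s)"
      by (metis (no_types, lifting) diff_conv_add_uminus)
    then show ?thesis by (simp add: has_real_derivative_iff_has_vector_derivative)
  qed
  have "((\<lambda>s. \<Psi> (x * (1 - s powr p)) - x * p * (s powr p * h' (x * (1 - s powr p)))) has_integral (F 1 - F 0)) {0..1}"
    by (rule fundamental_theorem_of_calculus_interior) (use cF dF in auto)
  moreover have "F 1 - F 0 = 0" by (simp add: F_def P0)
  ultimately have I0: "integral {0..1} (\<lambda>s. \<Psi> (x * (1 - s powr p)) - x * p * (s powr p * h' (x * (1 - s powr p)))) = 0"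
    by (simp add: integral_unique)
  have "integral {0..1} (\<lambda>s. \<Psi> (x * (1 - s powr p)) - x * p * (s powr p * h' (x * (1 - s powr p))))
      = integral {0..1} (\<lambda>s. \<Psi> (x * (1 - s powr p))) - x * p * integral {0..1} (\<lambda>s. s powr p * h' (x * (1 - s powr p)))"
    by (subst integral_diff) (auto intro!: integrable_continuous_real cPc chc2 continuous_intros)
  with I0 show ?thesis by simp
qed


lemma kernel_integral:
  fixes h h' :: "real \<Rightarrow> real" and T \<beta> :: real
  assumes b0: "0 < \<beta>" and b1: "\<beta> < 1" and T0: "0 < T"
    and dh: "\<And>\<tau>. \<tau> \<in> {0..T} \<Longrightarrow> (h has_real_derivative h' \<tau>) (at \<tau> within {0..T})"
    and ch': "continuous_on {0..T} h'"
  shows "((\<lambda>t. integral {0..t} (\<lambda>\<tau>. (t - \<tau>) powr (-\<beta>) * h' \<tau>)) has_integral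
           integral {0..T} (\<lambda>\<tau>. (T - \<tau>) powr (-\<beta>) * (h \<tau> - h 0))) {0..T}"
proof -
  define a where "a = 1 - \<beta>"
  define p where "p = 1 / a"
  have a0: "0 < a" and a1: "a < 1" using b0 b1 by (auto simp: a_def)
  have p1: "1 < p" using a0 a1 by (simp add: p_def)
  have p0: "0 < p" using p1 by simp
  define \<Psi> where "\<Psi> \<tau> = h \<tau> - h 0" for \<tau>
  have dP: "(\<Psi> has_real_derivative h' \<tau>) (at \<tau> within {0..T})" if "\<tau> \<in> {0..T}" for \<tau>
    unfolding \<Psi>_def[abs_def] using dh[OF that] by (auto intro!: derivative_eq_intros)
  have cP: "continuous_on {0..T} \<Psi>" by (rule DERIV_continuous_on[OF dP])
  have P0: "\<Psi> 0 = 0" by (simp add: \<Psi>_def)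
  define c where "c s = 1 - s powr p" for s
  have rng: "y * c s \<in> {0..T}" if "y \<in> {0..T}" "s \<in> {0..1}" for y s
  proof -
    have "s powr p \<in> {0..1}" using that p0 by (auto intro: powr_le1)
    then have ge: "0 \<le> y * c s" using that by (auto simp: c_def)
    have le: "y * c s \<le> y" unfolding c_def by (rule mult_left_le) (use that in auto)
    show ?thesis unfolding atLeastAtMost_iff using le ge that by auto
  qed
  have cc: "continuous_on {0..1} c"
    unfolding c_def by (intro continuous_intros continuous_on_powr') (use p0 in auto)
  define E where "E x = integral {0..x} (\<lambda>\<tau>. (x - \<tau>) powr (-\<beta>) * \<Psi> \<tau>)" for x
  define K where "K x = integral {0..x} (\<lambda>\<tau>. (x - \<tau>) powr (-\<beta>) * h' \<tau>)" for x
  define QP where "QP y = integral {0..1} (\<lambda>s. \<Psi> (y * c s))" for y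
  define Qh where "Qh y = integral {0..1} (\<lambda>s. h' (y * c s))" for y
  define D where "D y = integral {0..1} (\<lambda>s. c s * h' (y * c s))" for y
  define S where "S y = integral {0..1} (\<lambda>s. s powr p * h' (y * c s))" for y
  have Eeq: "E y = (y powr a / a) * QP y" if "y \<in> {0..T}" for y
  proof (cases "y = 0")
    case True then show ?thesis by (simp add: E_def)
  next
    case False
    then have "0 < y" using that by auto
    from integral_unique[OF kernel_right[OF b0 b1 this continuous_on_subset[OF cP]]] that
    show ?thesis by (simp add: E_def QP_def c_def a_def p_def)
  qed
  have Keq: "K y = (y powr a / a) * Qh y" if "y \<in> {0..T}" for y
  proof (cases "y = 0")
    case True then show ?thesis by (simp add: K_def)
  next
    case False
    then have "0 < y" using that by auto
    from integral_unique[OF kernel_right[OF b0 b1 this continuous_on_subset[OF ch']]] that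
    show ?thesis by (simp add: K_def Qh_def c_def a_def p_def)
  qed
  have contE: "continuous_on {0..T} E"
    using kernel_right_cont[OF b0 b1 cP] by (simp add: E_def[abs_def])
  have contK: "continuous_on {0..T} K"
    using kernel_right_cont[OF b0 b1 ch'] by (simp add: K_def[abs_def])
  have dE: "(E has_vector_derivative K x) (at x)" if x: "x \<in> {0<..<T}" for x
  proof -
    have x0: "0 < x" and xT: "x \<le> T" using x by auto
    have atw: "at x within {0..T} = at x" using x by (intro at_within_Icc_at) auto
    have cPc: "continuous_on {0..1} (\<lambda>s. \<Psi> (x * c s))"
      by (rule continuous_on_compose2[OF cP]) (use rng x in \<open>auto intro!: continuous_intros cc\<close>)
    have chc: "continuous_on {0..1} (\<lambda>s. h' (x * c s))"
      by (rule continuous_on_compose2[OF ch']) (use rng x in \<open>auto intro!: continuous_intros cc\<close>)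
    have dQ: "(QP has_real_derivative D x) (at x within {0..T})"
    proof -
      have "((\<lambda>y. integral (cbox 0 1) (\<lambda>s. \<Psi> (y * c s))) has_field_derivative
              integral (cbox 0 1) (\<lambda>s. c s * h' (x * c s))) (at x within {0..T})"
      proof (rule leibniz_rule_field_derivative, unfold cbox_interval)
        fix y s :: real assume y: "y \<in> {0..T}" and s: "s \<in> {0..1}"
        have d1: "((\<lambda>y. y * c s) has_field_derivative c s) (at y within {0..T})"
          by (auto intro!: derivative_eq_intros)
        have sub: "(\<lambda>y. y * c s) ` {0..T} \<subseteq> {0..T}" using rng s by auto
        have d2: "(\<Psi> has_field_derivative h' (y * c s)) (at (y * c s) within (\<lambda>y. y * c s) ` {0..T})"
          by (rule DERIV_subset[OF dP[OF rng[OF y s]] sub])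
        show "((\<lambda>y. \<Psi> (y * c s)) has_field_derivative c s * h' (y * c s)) (at y within {0..T})"
          using DERIV_image_chain[OF d2 d1] by (simp add: o_def mult.commute)
      next
        fix y assume y: "y \<in> {0..T}"
        show "(\<lambda>s. \<Psi> (y * c s)) integrable_on {0..1}"
          by (rule integrable_continuous_real, rule continuous_on_compose2[OF cP])
             (use rng y in \<open>auto intro!: continuous_intros cc\<close>)
      next
        show "continuous_on ({0..T} \<times> {0..1}) (\<lambda>(y, s). c s * h' (y * c s))"
          unfolding split_beta
        proof (intro continuous_intros)
          show "continuous_on ({0..T} \<times> {0..1}) (\<lambda>z. c (snd z))"
            by (rule continuous_on_compose2[OF cc]) (auto intro!: continuous_intros)
          show "continuous_on ({0..T} \<times> {0..1}) (\<lambda>z. h' (fst z * c (snd z)))"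
          proof (rule continuous_on_compose2[OF ch'])
            show "continuous_on ({0..T} \<times> {0..1}) (\<lambda>z. fst z * c (snd z))"
              by (intro continuous_intros continuous_on_compose2[OF cc]) auto
          qed (use rng in auto)
        qed
      qed (use x in auto)
      then show ?thesis by (simp add: QP_def[abs_def] D_def cbox_interval)
    qed
    then have dQ': "(QP has_real_derivative D x) (at x)" using atw by simp
    have dpow: "((\<lambda>y. y powr a / a) has_real_derivative x powr (- \<beta>)) (at x)"
      using x0 a0 by (auto intro!: derivative_eq_intros simp: a_def)
    have dprod: "((\<lambda>y. (y powr a / a) * QP y) has_real_derivative (x powr (- \<beta>) * QP x + (x powr a / a) * D x)) (at x)"
      using DERIV_mult[OF dpow dQ'] by (simp add: mult.commute)
    have ibp: "QP x = x * p * S x"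
      unfolding QP_def S_def c_def by (rule ibp_s[OF p1 x0 xT dP ch' P0])
    have i1: "(\<lambda>s. s powr p * h' (x * c s)) integrable_on {0..1}"
      by (intro integrable_continuous_real continuous_intros continuous_on_powr' chc) (use p0 in auto)
    have i2: "(\<lambda>s. c s * h' (x * c s)) integrable_on {0..1}"
      by (intro integrable_continuous_real continuous_intros cc chc)
    have "S x + D x = integral {0..1} (\<lambda>s. s powr p * h' (x * c s) + c s * h' (x * c s))"
      unfolding S_def D_def by (rule integral_add[symmetric, OF i1 i2])
    also have "\<dots> = Qh x" unfolding Qh_def by (rule integral_cong) (simp add: c_def algebra_simps)
    finally have QhSD: "Qh x = S x + D x" by simp
    have "x powr (- \<beta>) * QP x + (x powr a / a) * D x = (x powr a / a) * Qh x"
    proof -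
      have xx: "x powr (- \<beta>) * x = x powr a"
        using powr_add[of x "-\<beta>" 1] x0 by (simp add: a_def)
      have "x powr (- \<beta>) * QP x = (x powr (- \<beta>) * x) * p * S x"
        unfolding ibp by (simp only: mult.assoc)
      also have "\<dots> = (x powr a / a) * S x"
        unfolding xx p_def by simp
      finally have "x powr (- \<beta>) * QP x = (x powr a / a) * S x" .
      then show ?thesis using QhSD by (simp add: distrib_left)
    qed
    then have "((\<lambda>y. (y powr a / a) * QP y) has_real_derivative K x) (at x)"
      using dprod Keq[of x] x by auto
    then have "(E has_real_derivative K x) (at x)"
      by (rule has_field_derivative_transform_within_open[of _ _ _ "{0<..<T}"]) (use x Eeq in auto)
    then show ?thesis by (simp add: has_real_derivative_iff_has_vector_derivative)
  qed
  have "(K has_integral (E T - E 0)) {0..T}"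
    by (rule fundamental_theorem_of_calculus_interior) (use T0 contE dE in auto)
  then show ?thesis by (simp add: K_def[abs_def] E_def \<Psi>_def)
qed



lemma mvt_bound:
  fixes g G :: "real \<Rightarrow> 'a::real_normed_vector"
  assumes dg: "\<And>\<tau>. \<tau> \<in> {a..b} \<Longrightarrow> (g has_vector_derivative G \<tau>) (at \<tau> within {a..b})"
    and M: "\<And>\<tau>. \<tau> \<in> {a..b} \<Longrightarrow> norm (G \<tau>) \<le> M"
    and x: "x \<in> {a..b}" and y: "y \<in> {a..b}"
  shows "norm (g x - g y) \<le> M * \<bar>x - y\<bar>"
proof -
  have "norm (g x - g y) \<le> M * norm (x - y)"
  proof (rule differentiable_bound[of "{a..b}" g "\<lambda>\<tau> h. h *\<^sub>R G \<tau>"])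
    show "convex {a..b}" by simp
    show "(g has_derivative (\<lambda>h. h *\<^sub>R G \<tau>)) (at \<tau> within {a..b})" if "\<tau> \<in> {a..b}" for \<tau>
      using dg[OF that] by (simp add: has_vector_derivative_def)
    show "onorm (\<lambda>h. h *\<^sub>R G \<tau>) \<le> M" if "\<tau> \<in> {a..b}" for \<tau>
      using onorm_scaleR_left[OF bounded_linear_ident, of "G \<tau>"] M[OF that] by (simp add: onorm_id)
  qed (use x y in auto)
  then show ?thesis by simp
qed

lemma sing_ibp:
  fixes g G :: "real \<Rightarrow> 'a::real_inner" and t \<beta> :: real
  assumes b0: "0 < \<beta>" and b1: "\<beta> < 1" and t0: "0 < t"
    and dg: "\<And>\<tau>. \<tau> \<in> {0..t} \<Longrightarrow> (g has_vector_derivative G \<tau>) (at \<tau> within {0..t})"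
    and cG: "continuous_on {0..t} G"
    and Iu: "((\<lambda>\<tau>. (t - \<tau>) powr (-\<beta>) * (2 * inner (G \<tau>) (g t - g \<tau>))) has_integral I) {0..t}"
  shows "t powr (-\<beta>) * (norm (g t - g 0))^2 \<le> I"
proof -
  have cg: "continuous_on {0..t} g"
    by (rule continuous_on_vector_derivative) (rule dg)
  obtain M where M: "\<And>\<tau>. \<tau> \<in> {0..t} \<Longrightarrow> norm (G \<tau>) \<le> M"
    using compact_imp_bounded[OF compact_continuous_image[OF cG compact_Icc]]
    unfolding bounded_iff by (metis atLeastAtMost_iff image_eqI)
  have M0: "0 \<le> M" using M[of 0] t0 by (meson atLeastAtMost_iff norm_ge_zero order.trans less_eq_real_def)
  have bnd: "norm (g t - g \<tau>) \<le> M * (t - \<tau>)" if "\<tau> \<in> {0..t}" for \<tau>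
    using mvt_bound[OF dg M, of t \<tau>] that t0 by auto
  define w where "w \<tau> = inner (g t - g \<tau>) (g t - g \<tau>)" for \<tau>
  define u where "u \<tau> = 2 * inner (G \<tau>) (g t - g \<tau>)" for \<tau>
  define \<Psi> where "\<Psi> \<tau> = (t - \<tau>) powr (-\<beta>) * w \<tau>" for \<tau>
  have w_eq: "w \<tau> = (norm (g t - g \<tau>))^2" for \<tau> by (simp add: w_def power2_norm_eq_inner)
  have w0: "0 \<le> w \<tau>" for \<tau> by (simp add: w_eq)
  have cw: "continuous_on {0..t} w"
    unfolding w_def by (intro continuous_intros cg)
  have contPsi: "continuous_on {0..t} \<Psi>"
    unfolding continuous_on_def
  proof
    fix \<tau> assume \<tau>: "\<tau> \<in> {0..t}"
    show "(\<Psi> \<longlongrightarrow> \<Psi> \<tau>) (at \<tau> within {0..t})"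
    proof (cases "\<tau> = t")
      case False
      then have lt: "0 < t - \<tau>" using \<tau> by auto
      have "((\<lambda>x. t - x) \<longlongrightarrow> t - \<tau>) (at \<tau> within {0..t})"
        by (intro tendsto_intros)
      then have "((\<lambda>x. (t - x) powr (-\<beta>)) \<longlongrightarrow> (t - \<tau>) powr (-\<beta>)) (at \<tau> within {0..t})"
        using lt by (intro tendsto_intros) auto
      moreover have "(w \<longlongrightarrow> w \<tau>) (at \<tau> within {0..t})"
        using cw \<tau> by (simp add: continuous_on_def)
      ultimately show ?thesis unfolding \<Psi>_def by (rule tendsto_mult)
    next
      case True
      have "\<Psi> t = 0" by (simp add: \<Psi>_def)
      moreover have "(\<Psi> \<longlongrightarrow> 0) (at t within {0..t})"
      proof (rule real_tendsto_sandwich[where f = "\<lambda>_. 0" and h = "\<lambda>x. M^2 * (t - x) powr (2 - \<beta>)"])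
        show "\<forall>\<^sub>F x in at t within {0..t}. 0 \<le> \<Psi> x"
          by (auto simp: \<Psi>_def w0 intro!: always_eventually)
        have "\<Psi> x \<le> M^2 * (t - x) powr (2 - \<beta>)" if "x \<in> {0..t}" "x \<noteq> t" for x
        proof -
          have lt: "0 < t - x" using that by auto
          have "w x \<le> (M * (t - x))^2"
            unfolding w_eq using bnd[OF that(1)] by (intro power_mono) auto
          then have "\<Psi> x \<le> (t - x) powr (-\<beta>) * (M * (t - x))^2"
            unfolding \<Psi>_def by (intro mult_left_mono) auto
          also have "\<dots> = M^2 * ((t - x) powr (-\<beta>) * (t - x)^2)"
            by (simp add: power_mult_distrib)
          also have "(t - x) powr (-\<beta>) * (t - x)^2 = (t - x) powr (2 - \<beta>)"
          proof -
            have "(t - x) powr (2 - \<beta>) = (t - x) powr 2 * (t - x) powr (-\<beta>)"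
              by (metis diff_conv_add_uminus powr_add)
            also have "(t - x) powr 2 = (t - x)^2" using lt by (simp add: powr_numeral)
            finally show ?thesis by simp
          qed
          finally show ?thesis .
        qed
        then show "\<forall>\<^sub>F x in at t within {0..t}. \<Psi> x \<le> M^2 * (t - x) powr (2 - \<beta>)"
          by (auto simp: eventually_at_filter)
        show "((\<lambda>_. 0) \<longlongrightarrow> 0) (at t within {0..t})" by simp
        have "((\<lambda>x. M^2 * (t - x) powr (2 - \<beta>)) \<longlongrightarrow> M^2 * (t - t) powr (2 - \<beta>)) (at t within {0..t})"
          using b1 by (intro tendsto_intros) (auto simp: eventually_at_filter)
        then show "((\<lambda>x. M^2 * (t - x) powr (2 - \<beta>)) \<longlongrightarrow> 0) (at t within {0..t})"
          by simp
      qed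
      ultimately show ?thesis using True by simp
    qed
  qed
  have derPsi: "(\<Psi> has_vector_derivative (\<beta> * (t - \<tau>) powr (-\<beta> - 1) * w \<tau> - (t - \<tau>) powr (-\<beta>) * u \<tau>)) (at \<tau>)"
    if "\<tau> \<in> {0<..<t}" for \<tau>
  proof -
    have atw: "at \<tau> within {0..t} = at \<tau>" using that by (intro at_within_Icc_at) auto
    have dgt: "(g has_derivative (\<lambda>h. h *\<^sub>R G \<tau>)) (at \<tau>)"
      using dg[of \<tau>] that atw by (auto simp: has_vector_derivative_def)
    have d1: "((\<lambda>x. g t - g x) has_derivative (\<lambda>h. - (h *\<^sub>R G \<tau>))) (at \<tau>)"
      using has_derivative_diff[OF has_derivative_const dgt] by simp
    have "(w has_derivative (*) (- u \<tau>)) (at \<tau>)"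
      unfolding w_def[abs_def]
      by (rule has_derivative_eq_rhs[OF has_derivative_inner[OF d1 d1]])
         (auto simp: fun_eq_iff u_def inner_commute algebra_simps)
    then have dw: "(w has_real_derivative (- u \<tau>)) (at \<tau>)"
      unfolding has_field_derivative_def .
    have "(\<Psi> has_real_derivative (\<beta> * (t - \<tau>) powr (-\<beta> - 1) * w \<tau> - (t - \<tau>) powr (-\<beta>) * u \<tau>)) (at \<tau>)"
      unfolding \<Psi>_def[abs_def] using that
      by (auto intro!: derivative_eq_intros dw simp: algebra_simps)
    then show ?thesis by (simp add: has_real_derivative_iff_has_vector_derivative)
  qed
  have F: "((\<lambda>\<tau>. \<beta> * (t - \<tau>) powr (-\<beta> - 1) * w \<tau> - (t - \<tau>) powr (-\<beta>) * u \<tau>) has_integral (\<Psi> t - \<Psi> 0)) {0..t}"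
    by (rule fundamental_theorem_of_calculus_interior) (use t0 contPsi derPsi in auto)
  have "((\<lambda>\<tau>. (\<beta> * (t - \<tau>) powr (-\<beta> - 1) * w \<tau> - (t - \<tau>) powr (-\<beta>) * u \<tau>) + (t - \<tau>) powr (-\<beta>) * u \<tau>) has_integral (\<Psi> t - \<Psi> 0 + I)) {0..t}"
    using has_integral_add[OF F Iu[folded u_def]] by simp
  then have "((\<lambda>\<tau>. \<beta> * (t - \<tau>) powr (-\<beta> - 1) * w \<tau>) has_integral (\<Psi> t - \<Psi> 0 + I)) {0..t}"
    by simp
  then have "0 \<le> \<Psi> t - \<Psi> 0 + I"
    by (rule has_integral_nonneg) (use b0 w0 in auto)
  moreover have "\<Psi> t = 0" by (simp add: \<Psi>_def)
  moreover have "\<Psi> 0 = t powr (-\<beta>) * (norm (g t - g 0))^2" by (simp add: \<Psi>_def w_eq)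
  ultimately show ?thesis by simp
qed



typedef 'a wrap = "UNIV :: 'a::{real_inner,complete_space} set" morphisms unw wr by simp

setup_lifting type_definition_wrap

instantiation wrap :: ("{real_inner,complete_space}") real_normed_vector
begin
lift_definition zero_wrap :: "'a wrap" is 0 .
lift_definition plus_wrap :: "'a wrap \<Rightarrow> 'a wrap \<Rightarrow> 'a wrap" is "(+)" .
lift_definition minus_wrap :: "'a wrap \<Rightarrow> 'a wrap \<Rightarrow> 'a wrap" is "(-)" .
lift_definition uminus_wrap :: "'a wrap \<Rightarrow> 'a wrap" is uminus .
lift_definition scaleR_wrap :: "real \<Rightarrow> 'a wrap \<Rightarrow> 'a wrap" is scaleR .
lift_definition norm_wrap :: "'a wrap \<Rightarrow> real" is norm .
lift_definition sgn_wrap :: "'a wrap \<Rightarrow> 'a wrap" is sgn .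
lift_definition dist_wrap :: "'a wrap \<Rightarrow> 'a wrap \<Rightarrow> real" is dist .
definition uniformity_wrap :: "('a wrap \<times> 'a wrap) filter" where
  "uniformity_wrap = (INF e\<in>{0<..}. principal {(x, y). dist x y < e})"
definition open_wrap :: "'a wrap set \<Rightarrow> bool" where
  "open_wrap U = (\<forall>x\<in>U. eventually (\<lambda>(x', y). x' = x \<longrightarrow> y \<in> U) uniformity)"
instance
proof
  fix x y z :: "'a wrap" and a b :: real and U :: "'a wrap set"
  show "x + y + z = x + (y + z)" by transfer (rule add.assoc)
  show "x + y = y + x" by transfer (rule add.commute)
  show "0 + x = x" by transfer simp
  show "- x + x = 0" by transfer simp
  show "x - y = x + - y" by transfer simp
  show "a *\<^sub>R (x + y) = a *\<^sub>R x + a *\<^sub>R y" by transfer (rule scaleR_add_right)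
  show "(a + b) *\<^sub>R x = a *\<^sub>R x + b *\<^sub>R x" by transfer (rule scaleR_add_left)
  show "a *\<^sub>R b *\<^sub>R x = (a * b) *\<^sub>R x" by transfer simp
  show "1 *\<^sub>R x = x" by transfer simp
  show "uniformity = (INF e\<in>{0<..}. principal {(x, y). dist (x::'a wrap) y < e})"
    by (simp add: uniformity_wrap_def)
  show "open U = (\<forall>x\<in>U. \<forall>\<^sub>F (x', y) in uniformity. x' = x \<longrightarrow> y \<in> U)"
    by (simp add: open_wrap_def)
  show "dist x y = norm (x - y)" by transfer (rule dist_norm)
  show "sgn x = inverse (norm x) *\<^sub>R x" by transfer (rule sgn_div_norm)
  show "(norm x = 0) = (x = 0)" by transfer simp
  show "norm (x + y) \<le> norm x + norm y" by transfer (rule norm_triangle_ineq)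
  show "norm (a *\<^sub>R x) = \<bar>a\<bar> * norm x" by transfer simp
qed
end

instance wrap :: ("{real_inner,complete_space}") banach
proof
  fix X :: "nat \<Rightarrow> 'a wrap" assume "Cauchy X"
  then have "Cauchy (\<lambda>n. unw (X n))" by (simp add: Cauchy_def dist_wrap.rep_eq)
  then obtain L where L: "(\<lambda>n. unw (X n)) \<longlonglongrightarrow> L"
    using Cauchy_convergent_iff convergent_def by blast
  have "X \<longlonglongrightarrow> wr L"
    using L unfolding lim_sequentially by (simp add: dist_wrap.rep_eq wr_inverse)
  then show "convergent X" by (auto simp: convergent_def)
qed

lemma unw_scaleR: "unw (c *\<^sub>R x) = c *\<^sub>R unw x" by transfer simp
lemma wr_scaleR: "wr (c *\<^sub>R x) = c *\<^sub>R wr x" by (metis scaleR_wrap.abs_eq)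
lemma bl_unw: "bounded_linear unw"
  by (rule bounded_linear_intro[where K=1]) (transfer, simp)+
lemma cont_wr: "continuous_on S G \<Longrightarrow> continuous_on S (\<lambda>x. wr (G x))"
  unfolding continuous_on_def tendsto_iff by (simp add: dist_wrap.abs_eq)


lemma powr_neg_convex:
  fixes x y \<beta> :: real
  assumes "0 < x" "0 < y" "0 < \<beta>"
  shows "((x + y) / 2) powr (-\<beta>) \<le> (x powr (-\<beta>) + y powr (-\<beta>)) / 2"
proof -
  have cv: "convex_on {0<..} (\<lambda>x::real. x powr (-\<beta>))"
  proof (rule f''_ge0_imp_convex[where f' = "\<lambda>x. (-\<beta>) * x powr (-\<beta> - 1)" and f'' = "\<lambda>x. (-\<beta>) * ((-\<beta> - 1) * x powr (-\<beta> - 1 - 1))"])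
    show "convex {0::real<..}" by simp
  next
    fix x :: real assume "x \<in> {0<..}"
    then show "((\<lambda>x. x powr (-\<beta>)) has_real_derivative (-\<beta>) * x powr (-\<beta> - 1)) (at x)"
      by (auto intro!: derivative_eq_intros)
  next
    fix x :: real assume "x \<in> {0<..}"
    then show "((\<lambda>x. (-\<beta>) * x powr (-\<beta> - 1)) has_real_derivative (-\<beta>) * ((-\<beta> - 1) * x powr (-\<beta> - 1 - 1))) (at x)"
      by (auto intro!: derivative_eq_intros)
  next
    fix x :: real assume "x \<in> {0<..}"
    then show "0 \<le> (-\<beta>) * ((-\<beta> - 1) * x powr (-\<beta> - 1 - 1))"
      using assms by (intro mult_nonpos_nonpos) (auto intro: mult_nonpos_nonneg)
  qed
  have "(\<lambda>x. x powr (-\<beta>)) ((1 - 1/2) *\<^sub>R x + (1/2) *\<^sub>R y) \<le> (1 - 1/2) * x powr (-\<beta>) + (1/2) * y powr (-\<beta>)"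
    by (rule convex_onD[OF cv]) (use assms in auto)
  then show ?thesis by (simp add: field_simps)
qed

theorem lemma4p1:
  fixes g :: "real \<Rightarrow> 'a::{real_inner, complete_space}"
    and T \<beta> :: real
  assumes "T > 0" and "0 < \<beta>" and "\<beta> < 1"
    and "C1_on {0..T} g"
  shows "integral {0..T} (\<lambda>t. inner (caputo \<beta> g t) (g t))
           \<ge> (1/2) / Gamma (1 - \<beta>) *
               integral {0..T} (\<lambda>t. ((T - t) powr (-\<beta>) + t powr (-\<beta>)) * (norm (g t))\<^sup>2)
             - 1 / Gamma (1 - \<beta>) * integral {0..T} (\<lambda>t. t powr (-\<beta>) * inner (g 0) (g t))
         \<and> (1/2) / Gamma (1 - \<beta>) *
               integral {0..T} (\<lambda>t. ((T - t) powr (-\<beta>) + t powr (-\<beta>)) * (norm (g t))\<^sup>2)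
             - 1 / Gamma (1 - \<beta>) * integral {0..T} (\<lambda>t. t powr (-\<beta>) * inner (g 0) (g t))
           \<ge> (T / 2) powr (-\<beta>) / Gamma (1 - \<beta>) * integral {0..T} (\<lambda>t. (norm (g t))\<^sup>2)
             - 1 / Gamma (1 - \<beta>) * integral {0..T} (\<lambda>t. t powr (-\<beta>) * inner (g 0) (g t))"
proof -
  note b0 = assms(2) and b1 = assms(3) and T0 = assms(1)
  define \<Gamma> where "\<Gamma> = Gamma (1 - \<beta>)"
  have G0: "0 < \<Gamma>" unfolding \<Gamma>_def using b1 by simp
  define k where "k = T powr (1 - \<beta>) / (1 - \<beta>)"
  obtain G where dg: "\<And>t. t \<in> {0..T} \<Longrightarrow> (g has_vector_derivative G t) (at t within {0..T})"
    and cG: "continuous_on {0..T} G"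
    using assms(4) unfolding C1_on_def by blast
  have cg: "continuous_on {0..T} g" by (rule continuous_on_vector_derivative) (rule dg)
  define Kg where "Kg t = integral {0..t} (\<lambda>\<tau>. (t - \<tau>) powr (-\<beta>) *\<^sub>R G \<tau>)" for t
  define Gw where "Gw \<tau> = wr (G \<tau>)" for \<tau>
  have cGw: "continuous_on {0..T} Gw" unfolding Gw_def by (rule cont_wr[OF cG])
  define Kw where "Kw t = integral {0..t} (\<lambda>\<tau>. (t - \<tau>) powr (-\<beta>) *\<^sub>R Gw \<tau>)" for t
  have KGt: "((\<lambda>\<tau>. (t - \<tau>) powr (-\<beta>) *\<^sub>R G \<tau>) has_integral unw (Kw t)) {0..t}" if t: "t \<in> {0..T}" for t
  proof (cases "t = 0")
    case True
    then show ?thesis by (simp add: Kw_def zero_wrap.rep_eq has_integral_refl)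
  next
    case False
    then have t0: "0 < t" using t by auto
    have sub: "{0..t} \<subseteq> {0..T}" using t by auto
    have "((\<lambda>\<tau>. (t - \<tau>) powr (-\<beta>) *\<^sub>R Gw \<tau>) has_integral Kw t) {0..t}"
      unfolding Kw_def using kernel_right[OF b0 b1 t0 continuous_on_subset[OF cGw sub]]
      by (auto intro: integrable_integral)
    from has_integral_linear[OF this bl_unw]
    show ?thesis by (simp add: o_def unw_scaleR Gw_def wr_inverse)
  qed
  have KgKw: "Kg t = unw (Kw t)" if "t \<in> {0..T}" for t
    unfolding Kg_def using KGt[OF that] by (rule integral_unique)
  have cKw: "continuous_on {0..T} Kw"
    unfolding Kw_def[abs_def] by (rule kernel_right_cont[OF b0 b1 cGw])
  have cKg: "continuous_on {0..T} Kg"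
  proof -
    have "continuous_on {0..T} (\<lambda>t. unw (Kw t))"
      by (rule continuous_on_compose2[OF linear_continuous_on[OF bl_unw] cKw]) auto
    then show ?thesis by (rule continuous_on_eq) (simp add: KgKw)
  qed
  have cap: "caputo \<beta> g t = (1 / \<Gamma>) *\<^sub>R Kg t" if t: "t \<in> {0..T}" for t
  proof (cases "t = 0")
    case True then show ?thesis by (simp add: caputo_def Kg_def)
  next
    case False
    then have t0: "0 < t" using t by auto
    have "vector_derivative g (at \<tau> within {0..t}) = G \<tau>" if "\<tau> \<in> {0..t}" for \<tau>
    proof -
      have "(g has_vector_derivative G \<tau>) (at \<tau> within {0..t})"
        by (rule has_vector_derivative_within_subset[OF dg]) (use that t in auto)
      then show ?thesis using vector_derivative_within_cbox[of 0 t \<tau> g "G \<tau>"] t0 that by auto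
    qed
    then show ?thesis unfolding caputo_def Kg_def \<Gamma>_def
      by (metis (no_types, lifting) integral_cong)
  qed
  define h where "h \<tau> = inner (g \<tau>) (g \<tau>)" for \<tau>
  define h' where "h' \<tau> = 2 * inner (G \<tau>) (g \<tau>)" for \<tau>
  have hn: "h \<tau> = (norm (g \<tau>))^2" for \<tau> by (simp add: h_def power2_norm_eq_inner)
  have dh: "(h has_real_derivative h' \<tau>) (at \<tau> within {0..T})" if "\<tau> \<in> {0..T}" for \<tau>
  proof -
    have d: "(g has_derivative (\<lambda>x. x *\<^sub>R G \<tau>)) (at \<tau> within {0..T})"
      using dg[OF that] by (simp add: has_vector_derivative_def)
    have "(h has_derivative (*) (h' \<tau>)) (at \<tau> within {0..T})"
      unfolding h_def[abs_def]
      by (rule has_derivative_eq_rhs[OF has_derivative_inner[OF d d]])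
         (auto simp: fun_eq_iff h'_def inner_commute algebra_simps)
    then show ?thesis unfolding has_field_derivative_def .
  qed
  have ch: "continuous_on {0..T} h" unfolding h_def by (intro continuous_intros cg)
  have ch': "continuous_on {0..T} h'" unfolding h'_def by (intro continuous_intros cg cG)
  define J where "J t = integral {0..t} (\<lambda>\<tau>. (t - \<tau>) powr (-\<beta>) * h' \<tau>)" for t
  have pw: "J t + t powr (-\<beta>) * (norm (g t - g 0))^2 \<le> 2 * inner (Kg t) (g t)" if t: "t \<in> {0..T}" for t
  proof (cases "t = 0")
    case True then show ?thesis by (simp add: J_def Kg_def)
  next
    case False
    then have t0: "0 < t" using t by auto
    have sub: "{0..t} \<subseteq> {0..T}" using t by auto
    have KG: "((\<lambda>\<tau>. (t - \<tau>) powr (-\<beta>) *\<^sub>R G \<tau>) has_integral Kg t) {0..t}"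
      using KGt[OF t] KgKw[OF t] by simp
    have KG2: "((\<lambda>\<tau>. 2 * inner ((t - \<tau>) powr (-\<beta>) *\<^sub>R G \<tau>) (g t)) has_integral 2 * inner (Kg t) (g t)) {0..t}"
      using has_integral_mult_right[OF has_integral_linear[OF KG bounded_linear_inner_left[of "g t"]]]
      by (simp add: o_def)
    have JJ: "((\<lambda>\<tau>. (t - \<tau>) powr (-\<beta>) * h' \<tau>) has_integral J t) {0..t}"
      unfolding J_def using kernel_right[OF b0 b1 t0 continuous_on_subset[OF ch' sub]]
      by (auto intro: integrable_integral)
    have "((\<lambda>\<tau>. 2 * inner ((t - \<tau>) powr (-\<beta>) *\<^sub>R G \<tau>) (g t) - (t - \<tau>) powr (-\<beta>) * h' \<tau>) has_integral
            (2 * inner (Kg t) (g t) - J t)) {0..t}"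
      by (rule has_integral_diff[OF KG2 JJ])
    then have Iu: "((\<lambda>\<tau>. (t - \<tau>) powr (-\<beta>) * (2 * inner (G \<tau>) (g t - g \<tau>))) has_integral
            (2 * inner (Kg t) (g t) - J t)) {0..t}"
      by (simp add: h'_def inner_diff_right algebra_simps)
    have dgt: "\<And>\<tau>. \<tau> \<in> {0..t} \<Longrightarrow> (g has_vector_derivative G \<tau>) (at \<tau> within {0..t})"
      using dg sub by (meson has_vector_derivative_within_subset subsetD)
    from sing_ibp[OF b0 b1 t0 dgt continuous_on_subset[OF cG sub] Iu]
    show ?thesis by simp
  qed
  have cJ: "continuous_on {0..T} J"
    using kernel_right_cont[OF b0 b1 ch'] by (simp add: J_def[abs_def])
  have cL: "continuous_on {0..T} (\<lambda>t. inner (Kg t) (g t))"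
    by (intro continuous_intros cKg cg)
  define L where "L = integral {0..T} (\<lambda>t. inner (Kg t) (g t))"
  have LHS: "integral {0..T} (\<lambda>t. inner (caputo \<beta> g t) (g t)) = L / \<Gamma>"
  proof -
    have "integral {0..T} (\<lambda>t. inner (caputo \<beta> g t) (g t)) = integral {0..T} (\<lambda>t. (1 / \<Gamma>) * inner (Kg t) (g t))"
      by (rule integral_cong) (simp add: cap)
    also have "\<dots> = (1 / \<Gamma>) * L" unfolding L_def by simp
    finally show ?thesis by simp
  qed
  have sing_int: "((\<lambda>t. (T - t) powr (-\<beta>) * f t) has_integral integral {0..T} (\<lambda>t. (T - t) powr (-\<beta>) * f t)) {0..T}"
    if "continuous_on {0..T} f" for f :: "real \<Rightarrow> real"
    using kernel_right[OF b0 b1 T0 that] by (auto intro: integrable_integral)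
  have sing_intL: "((\<lambda>t. t powr (-\<beta>) * f t) has_integral integral {0..T} (\<lambda>t. t powr (-\<beta>) * f t)) {0..T}"
    if "continuous_on {0..T} f" for f :: "real \<Rightarrow> real"
    using kernel_left[OF b0 b1 T0 that] by (auto intro: integrable_integral)
  have k1R: "((\<lambda>t. (T - t) powr (-\<beta>)) has_integral k) {0..T}"
    using kernel_right[OF b0 b1 T0, of "\<lambda>_. 1::real"] by (simp add: k_def)
  have k1L: "((\<lambda>t. t powr (-\<beta>)) has_integral k) {0..T}"
    using kernel_left[OF b0 b1 T0, of "\<lambda>_. 1::real"] by (simp add: k_def)
  define A where "A = integral {0..T} (\<lambda>t. (T - t) powr (-\<beta>) * h t)"
  define B where "B = integral {0..T} (\<lambda>t. t powr (-\<beta>) * h t)"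
  define C where "C = integral {0..T} (\<lambda>t. t powr (-\<beta>) * inner (g 0) (g t))"
  have cgi: "continuous_on {0..T} (\<lambda>t. inner (g 0) (g t))" by (intro continuous_intros cg)
  have iA: "((\<lambda>t. (T - t) powr (-\<beta>) * h t) has_integral A) {0..T}" unfolding A_def by (rule sing_int[OF ch])
  have iB: "((\<lambda>t. t powr (-\<beta>) * h t) has_integral B) {0..T}" unfolding B_def by (rule sing_intL[OF ch])
  have iC: "((\<lambda>t. t powr (-\<beta>) * inner (g 0) (g t)) has_integral C) {0..T}" unfolding C_def by (rule sing_intL[OF cgi])
  have IJ: "(J has_integral (A - h 0 * k)) {0..T}"
  proof -
    have "((\<lambda>t. (T - t) powr (-\<beta>) * h t - h 0 * (T - t) powr (-\<beta>)) has_integral (A - h 0 * k)) {0..T}"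
      by (rule has_integral_diff[OF iA has_integral_mult_right[OF k1R]])
    then have "((\<lambda>t. (T - t) powr (-\<beta>) * (h t - h 0)) has_integral (A - h 0 * k)) {0..T}"
      by (simp add: algebra_simps)
    then have "integral {0..T} (\<lambda>t. (T - t) powr (-\<beta>) * (h t - h 0)) = A - h 0 * k"
      by (rule integral_unique)
    then show ?thesis
      using kernel_integral[OF b0 b1 T0 dh ch'] by (simp add: J_def[abs_def])
  qed
  have IN: "((\<lambda>t. t powr (-\<beta>) * (norm (g t - g 0))^2) has_integral (B - 2 * C + h 0 * k)) {0..T}"
  proof -
    have nrm: "(norm (g t - g 0))^2 = h t - 2 * inner (g 0) (g t) + h 0" for t
      by (simp add: power2_norm_eq_inner h_def inner_diff_left inner_diff_right inner_commute)
    have eq: "t powr (-\<beta>) * (norm (g t - g 0))^2 = t powr (-\<beta>) * h t - 2 * (t powr (-\<beta>) * inner (g 0) (g t)) + h 0 * t powr (-\<beta>)" for t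
      unfolding nrm by (simp add: algebra_simps)
    show ?thesis unfolding eq
      by (intro has_integral_add has_integral_diff iB has_integral_mult_right iC k1L)
  qed
  have I2L: "((\<lambda>t. 2 * inner (Kg t) (g t)) has_integral 2 * L) {0..T}"
    unfolding L_def by (rule has_integral_mult_right[OF integrable_integral[OF integrable_continuous_real[OF cL]]])
  have "(A - h 0 * k) + (B - 2 * C + h 0 * k) \<le> 2 * L"
    by (rule has_integral_le[OF has_integral_add[OF IJ IN] I2L]) (use pw in auto)
  then have key: "A + B - 2 * C \<le> 2 * L" by simp
  have AB: "integral {0..T} (\<lambda>t. ((T - t) powr (-\<beta>) + t powr (-\<beta>)) * (norm (g t))\<^sup>2) = A + B"
  proof -
    have "((\<lambda>t. (T - t) powr (-\<beta>) * h t + t powr (-\<beta>) * h t) has_integral A + B) {0..T}"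
      by (rule has_integral_add[OF iA iB])
    then show ?thesis by (simp add: hn algebra_simps integral_unique)
  qed
  have H: "integral {0..T} (\<lambda>t. (norm (g t))\<^sup>2) = integral {0..T} h" by (rule integral_cong) (simp add: hn)
  have ineq1: "(1/2) / \<Gamma> * (A + B) - 1 / \<Gamma> * C \<le> L / \<Gamma>"
  proof -
    have "(1/2) / \<Gamma> * (A + B) - 1 / \<Gamma> * C = ((A + B - 2 * C) / 2) / \<Gamma>"
      using G0 by (simp add: field_simps)
    also have "\<dots> \<le> L / \<Gamma>"
      using key G0 by (intro divide_right_mono) auto
    finally show ?thesis .
  qed
  have ineq2: "(T / 2) powr (-\<beta>) * integral {0..T} h \<le> (1/2) * (A + B)"
  proof -
    have ih: "h integrable_on {0..T}" by (rule integrable_continuous_real[OF ch])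
    have iAB: "(\<lambda>t. (1/2) * ((T - t) powr (-\<beta>) * h t + t powr (-\<beta>) * h t)) integrable_on {0..T}"
      using has_integral_mult_right[OF has_integral_add[OF iA iB]] by blast
    have "(T / 2) powr (-\<beta>) * integral {0..T} h = integral {0<..<T} (\<lambda>t. (T / 2) powr (-\<beta>) * h t)"
      using integral_open_interval_real[of 0 T "\<lambda>t. (T / 2) powr (-\<beta>) * h t"] by simp
    also have "\<dots> \<le> integral {0<..<T} (\<lambda>t. (1/2) * ((T - t) powr (-\<beta>) * h t + t powr (-\<beta>) * h t))"
    proof (rule integral_le)
      show "(\<lambda>t. (T / 2) powr (-\<beta>) * h t) integrable_on {0<..<T}"
        unfolding integrable_on_open_interval_real by (rule integrable_on_mult_right[OF ih])
      show "(\<lambda>t. (1/2) * ((T - t) powr (-\<beta>) * h t + t powr (-\<beta>) * h t)) integrable_on {0<..<T}"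
        unfolding integrable_on_open_interval_real by (rule iAB)
      fix t assume t: "t \<in> {0<..<T}"
      have "((T - t + t) / 2) powr (-\<beta>) \<le> ((T - t) powr (-\<beta>) + t powr (-\<beta>)) / 2"
        by (rule powr_neg_convex) (use t b0 in auto)
      then have cv: "(T / 2) powr (-\<beta>) \<le> ((T - t) powr (-\<beta>) + t powr (-\<beta>)) / 2" by simp
      have "(T / 2) powr (-\<beta>) * h t \<le> (((T - t) powr (-\<beta>) + t powr (-\<beta>)) / 2) * h t"
        by (rule mult_right_mono[OF cv]) (simp add: hn)
      then show "(T / 2) powr (-\<beta>) * h t \<le> (1/2) * ((T - t) powr (-\<beta>) * h t + t powr (-\<beta>) * h t)"
        by (simp add: algebra_simps)
    qed
    also have "\<dots> = (1/2) * (A + B)"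
      using integral_open_interval_real[of 0 T "\<lambda>t. (1/2) * ((T - t) powr (-\<beta>) * h t + t powr (-\<beta>) * h t)"]
        integral_unique[OF has_integral_mult_right[OF has_integral_add[OF iA iB], of "1/2"]]
      by simp
    finally show ?thesis .
  qed
  have ineq2': "(T / 2) powr (-\<beta>) / \<Gamma> * integral {0..T} h \<le> (1/2) / \<Gamma> * (A + B)"
    using divide_right_mono[OF ineq2, of \<Gamma>] G0 by (simp add: field_simps)
  show ?thesis
    unfolding LHS AB H C_def[symmetric] \<Gamma>_def[symmetric]
    using ineq1 ineq2' by simp
qed

end
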